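(* Let $\mathcal X,\mathcal Y$ be Polish spaces, $c:\mathcal X\times\mathcal Y\to\mathbb R$ a measurable cost function bounded from below, $\varepsilon>0$, and $\tilde\mu\in\mathcal P(\mathcal X)$. Let $\mathcal F\subseteq L^{\exp}_\varepsilon(\tilde\mu)$ be a class of functions on $\mathcal X$, and let $\mathcal F^{(c,\varepsilon)}_{\tilde\mu}=\{\phi^{(c,\varepsilon)}_{\tilde\mu}\mid\phi\in\mathcal F\}$. Then for every $\delta>0$, \[ N(\delta,\mathcal F^{(c,\varepsilon)}_{\tilde\mu},\|\cdot\|_\infty)\le N(\delta/2,\mathcal F,\|\cdot\|_\infty). \]
   Context: $\exp_\varepsilon(t)=\exp(t/\varepsilon)$. $L^{\exp}_\varepsilon(\tilde\mu)$ is the set of measurable $\phi:\mathcal X\to[-\infty,\infty)$ with $0<\int\exp_\varepsilon(\phi)\,d\tilde\mu<\infty$. For such $\phi$, $\phi^{(c,\varepsilon)}_{\tilde\mu}(y)=-\varepsilon\log\int_{\mathcal X}\exp_\varepsilon(\phi(x)-c(x,y))\,d\tilde\mu(x)$, $y\in\mathcal Y$. For a class $\mathcal G$ of real-valued functions on a set $S$ and $\delta>0$, the uniform covering number $N(\delta,\mathcal G,\|\cdot\|_\infty)$ is the smallest $n\in\mathbb N$ such that there exist $f_1,\dots,f_n:S\to\mathbb R$ with $\sup_{f\in\mathcal G}\min_i\|f-f_i\|_\infty\le\delta$ (and $+\infty$ if no such $n$ exists), where $\|f\|_\infty=\sup_{s\in S}|f(s)|$. *)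

theory Defs
  imports "HOL-Probability.Probability"
begin

definition exp_eps :: "real \<Rightarrow> ereal \<Rightarrow> real" where
  "exp_eps \<epsilon> t = (if t = -\<infinity> then 0 else exp (real_of_ereal t / \<epsilon>))"

definition Lexp :: "real \<Rightarrow> 'a measure \<Rightarrow> ('a \<Rightarrow> ereal) set" where
  "Lexp \<epsilon> \<mu> = {\<phi>. \<phi> \<in> borel_measurable \<mu> \<and> (\<forall>x. \<phi> x \<noteq> \<infinity>) \<and>
      0 < (\<integral>\<^sup>+ x. ennreal (exp_eps \<epsilon> (\<phi> x)) \<partial>\<mu>) \<and>
      (\<integral>\<^sup>+ x. ennreal (exp_eps \<epsilon> (\<phi> x)) \<partial>\<mu>) < \<infinity>}"

definition ctrans :: "('a \<times> 'b \<Rightarrow> real) \<Rightarrow> real \<Rightarrow> 'a measure \<Rightarrow> ('a \<Rightarrow> ereal) \<Rightarrow> 'b \<Rightarrow> real" where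
  "ctrans c \<epsilon> \<mu> \<phi> y = - \<epsilon> * ln (\<integral>x. exp_eps \<epsilon> (\<phi> x - ereal (c (x, y))) \<partial>\<mu>)"

definition covering_number :: "real \<Rightarrow> ('s \<Rightarrow> ereal) set \<Rightarrow> enat" where
  "covering_number \<delta> G =
     (if \<exists>n. \<exists>f :: nat \<Rightarrow> 's \<Rightarrow> real. \<forall>g\<in>G. \<exists>i<n. \<forall>s. \<bar>g s - ereal (f i s)\<bar> \<le> ereal \<delta>
      then enat (LEAST n. \<exists>f :: nat \<Rightarrow> 's \<Rightarrow> real. \<forall>g\<in>G. \<exists>i<n. \<forall>s. \<bar>g s - ereal (f i s)\<bar> \<le> ereal \<delta>)
      else \<infinity>)"

end

theory Submission imports Defs begin

lemma integ_aux:
  fixes \<mu> :: "'a::polish_space measure" and c :: "'a \<times> 'b::polish_space \<Rightarrow> real"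
  assumes P: "prob_space \<mu>" and S: "sets \<mu> = sets borel" and C: "c \<in> borel_measurable borel"
    and m: "\<forall>p. m \<le> c p" and e: "\<epsilon> > 0" and L: "(\<lambda>x. ereal (a x)) \<in> Lexp \<epsilon> \<mu>"
  shows "integrable \<mu> (\<lambda>x. exp ((a x - c (x, y)) / \<epsilon>))"
    and "(\<integral>x. exp ((a x - c (x, y)) / \<epsilon>) \<partial>\<mu>) > 0"
    and "ctrans c \<epsilon> \<mu> (\<lambda>x. ereal (a x)) y = - \<epsilon> * ln (\<integral>x. exp ((a x - c (x, y)) / \<epsilon>) \<partial>\<mu>)"
proof -
  have am: "a \<in> borel_measurable \<mu>"
  proof -
    have "(\<lambda>x. real_of_ereal (ereal (a x))) \<in> borel_measurable \<mu>"
      using L unfolding Lexp_def by (intro borel_measurable_real_of_ereal) auto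
    then show ?thesis by simp
  qed
  have pm: "(\<lambda>x. (x, y)) \<in> borel_measurable borel"
    by (intro borel_measurable_continuous_onI continuous_intros)
  have cm: "(\<lambda>x. c (x, y)) \<in> borel_measurable \<mu>"
    unfolding measurable_cong_sets[OF S refl] using measurable_compose[OF pm C] by (simp add: o_def)
  have um: "(\<lambda>x. exp ((a x - c (x, y)) / \<epsilon>)) \<in> borel_measurable \<mu>"
    using am cm by measurable
  have fin: "(\<integral>\<^sup>+ x. ennreal (exp (a x / \<epsilon>)) \<partial>\<mu>) < \<infinity>"
    using L unfolding Lexp_def exp_eps_def by simp
  have ei: "integrable \<mu> (\<lambda>x. exp (a x / \<epsilon>))"
    by (rule integrableI_nn_integral_finite[where x="enn2real (\<integral>\<^sup>+ x. ennreal (exp (a x / \<epsilon>)) \<partial>\<mu>)"])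
       (use am fin in \<open>auto simp: less_top\<close>)
  have bd: "exp ((a x - c (x, y)) / \<epsilon>) \<le> exp (a x / \<epsilon>) * exp (- m / \<epsilon>)" for x
  proof -
    have "(a x - c (x, y)) / \<epsilon> \<le> a x / \<epsilon> + - m / \<epsilon>"
      using m e by (simp add: divide_right_mono diff_divide_distrib)
    then show ?thesis by (simp add: exp_add[symmetric])
  qed
  show I: "integrable \<mu> (\<lambda>x. exp ((a x - c (x, y)) / \<epsilon>))"
    by (rule Bochner_Integration.integrable_bound[OF integrable_mult_left[OF ei, of "exp (- m / \<epsilon>)"]])
       (use um bd in auto)
  have "(\<integral>x. exp ((a x - c (x, y)) / \<epsilon>) \<partial>\<mu>) \<noteq> 0"
    using integral_nonneg_eq_0_iff_AE[OF I] prob_space.AE_False[OF P] by simp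
  moreover have "(\<integral>x. exp ((a x - c (x, y)) / \<epsilon>) \<partial>\<mu>) \<ge> 0" by simp
  ultimately show "(\<integral>x. exp ((a x - c (x, y)) / \<epsilon>) \<partial>\<mu>) > 0" by linarith
  show "ctrans c \<epsilon> \<mu> (\<lambda>x. ereal (a x)) y = - \<epsilon> * ln (\<integral>x. exp ((a x - c (x, y)) / \<epsilon>) \<partial>\<mu>)"
    unfolding ctrans_def exp_eps_def by simp
qed

lemma ctrans_cmp:
  fixes \<mu> :: "'a::polish_space measure" and c :: "'a \<times> 'b::polish_space \<Rightarrow> real"
  assumes P: "prob_space \<mu>" and S: "sets \<mu> = sets borel" and C: "c \<in> borel_measurable borel"
    and m: "\<forall>p. m \<le> c p" and e: "\<epsilon> > 0"
    and La: "(\<lambda>x. ereal (a x)) \<in> Lexp \<epsilon> \<mu>" and Lb: "(\<lambda>x. ereal (b x)) \<in> Lexp \<epsilon> \<mu>"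
    and ab: "\<forall>x. a x \<le> b x + d"
  shows "ctrans c \<epsilon> \<mu> (\<lambda>x. ereal (b x)) y \<le> ctrans c \<epsilon> \<mu> (\<lambda>x. ereal (a x)) y + d"
proof -
  note A = integ_aux[OF P S C m e La, of y] and B = integ_aux[OF P S C m e Lb, of y]
  define Ia where "Ia = (\<integral>x. exp ((a x - c (x, y)) / \<epsilon>) \<partial>\<mu>)"
  define Ib where "Ib = (\<integral>x. exp ((b x - c (x, y)) / \<epsilon>) \<partial>\<mu>)"
  have pt: "exp ((a x - c (x, y)) / \<epsilon>) \<le> exp (d / \<epsilon>) * exp ((b x - c (x, y)) / \<epsilon>)" for x
  proof -
    have "(a x - c (x, y)) / \<epsilon> \<le> d / \<epsilon> + (b x - c (x, y)) / \<epsilon>"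
    proof -
      have "a x - c (x, y) \<le> d + (b x - c (x, y))" using ab by (smt (verit))
      then have "(a x - c (x, y)) / \<epsilon> \<le> (d + (b x - c (x, y))) / \<epsilon>" using e by (simp add: divide_right_mono)
      then show ?thesis by (simp add: add_divide_distrib)
    qed
    then show ?thesis by (simp add: exp_add[symmetric])
  qed
  have "Ia \<le> (\<integral>x. exp (d / \<epsilon>) * exp ((b x - c (x, y)) / \<epsilon>) \<partial>\<mu>)"
    unfolding Ia_def by (rule integral_mono) (use A(1) B(1) pt in auto)
  also have "\<dots> = exp (d / \<epsilon>) * Ib" unfolding Ib_def by simp
  finally have "Ia \<le> exp (d / \<epsilon>) * Ib" .
  moreover have "Ia > 0" "Ib > 0" using A(2) B(2) Ia_def Ib_def by auto
  ultimately have "ln Ia \<le> ln (exp (d / \<epsilon>) * Ib)" by simp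
  also have "\<dots> = d / \<epsilon> + ln Ib" using \<open>Ib > 0\<close> by (simp add: ln_mult)
  finally have "\<epsilon> * ln Ia \<le> \<epsilon> * (d / \<epsilon> + ln Ib)" using e by (simp add: mult_left_mono)
  also have "\<dots> = d + \<epsilon> * ln Ib" using e by (simp add: field_simps)
  finally have "\<epsilon> * ln Ia \<le> d + \<epsilon> * ln Ib" .
  then show ?thesis using A(3) B(3) Ia_def Ib_def by simp
qed

theorem mainTheorem3:
  fixes \<mu> :: "'a::polish_space measure"
    and c :: "'a \<times> 'b::polish_space \<Rightarrow> real"
    and \<epsilon> \<delta> :: real
    and F :: "('a \<Rightarrow> ereal) set"
  assumes "prob_space \<mu>"
    and "sets \<mu> = sets borel"
    and "c \<in> borel_measurable borel"
    and "\<exists>m. \<forall>p. m \<le> c p"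
    and "\<epsilon> > 0"
    and "F \<subseteq> Lexp \<epsilon> \<mu>"
    and "\<delta> > 0"
  shows "covering_number \<delta> ((\<lambda>\<phi>. (\<lambda>y. ereal (ctrans c \<epsilon> \<mu> \<phi> y))) ` F)
           \<le> covering_number (\<delta> / 2) F"
proof (cases "\<exists>n. \<exists>f :: nat \<Rightarrow> 'a \<Rightarrow> real. \<forall>g\<in>F. \<exists>i<n. \<forall>s. \<bar>g s - ereal (f i s)\<bar> \<le> ereal (\<delta>/2)")
  case False
  then have "covering_number (\<delta> / 2) F = \<infinity>" unfolding covering_number_def by auto
  then show ?thesis by simp
next
  case True
  obtain m where m: "\<forall>p. m \<le> c p" using assms(4) by blast
  define n where "n = (LEAST n. \<exists>f :: nat \<Rightarrow> 'a \<Rightarrow> real. \<forall>g\<in>F. \<exists>i<n. \<forall>s. \<bar>g s - ereal (f i s)\<bar> \<le> ereal (\<delta>/2))"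
  have R: "covering_number (\<delta> / 2) F = enat n"
    unfolding covering_number_def n_def using True by simp
  obtain f :: "nat \<Rightarrow> 'a \<Rightarrow> real" where f: "\<forall>g\<in>F. \<exists>i<n. \<forall>s. \<bar>g s - ereal (f i s)\<bar> \<le> ereal (\<delta>/2)"
    using LeastI_ex[OF True] unfolding n_def by blast
  define Q where "Q i \<phi> \<longleftrightarrow> \<phi> \<in> F \<and> (\<forall>s. \<bar>\<phi> s - ereal (f i s)\<bar> \<le> ereal (\<delta>/2))" for i \<phi>
  define ph where "ph i = (SOME \<phi>. Q i \<phi>)" for i
  define G where "G = (\<lambda>\<phi>. (\<lambda>y. ereal (ctrans c \<epsilon> \<mu> \<phi> y))) ` F"
  define h where "h i = ctrans c \<epsilon> \<mu> (ph i)" for i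
  have fin: "\<phi> = (\<lambda>x. ereal (real_of_ereal (\<phi> x)))"
    and cl: "\<forall>x. \<bar>real_of_ereal (\<phi> x) - f i x\<bar> \<le> \<delta>/2"
    if "Q i \<phi>" for i \<phi>
  proof -
    have X: "\<phi> x \<noteq> \<infinity> \<and> \<phi> x \<noteq> -\<infinity> \<and> \<bar>real_of_ereal (\<phi> x) - f i x\<bar> \<le> \<delta>/2" for x
    proof -
      have "\<bar>\<phi> x - ereal (f i x)\<bar> \<le> ereal (\<delta>/2)" using that Q_def by auto
      then show ?thesis by (cases "\<phi> x") auto
    qed
    from X show "\<phi> = (\<lambda>x. ereal (real_of_ereal (\<phi> x)))" "\<forall>x. \<bar>real_of_ereal (\<phi> x) - f i x\<bar> \<le> \<delta>/2"
      by (auto intro!: ext simp: ereal_real)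
  qed
  have cov: "\<forall>g\<in>G. \<exists>i<n. \<forall>s. \<bar>g s - ereal (h i s)\<bar> \<le> ereal \<delta>"
  proof
    fix g assume "g \<in> G"
    then obtain \<psi> where \<psi>: "\<psi> \<in> F" "g = (\<lambda>y. ereal (ctrans c \<epsilon> \<mu> \<psi> y))" unfolding G_def by auto
    obtain i where i: "i < n" "\<forall>s. \<bar>\<psi> s - ereal (f i s)\<bar> \<le> ereal (\<delta>/2)" using f \<psi>(1) by blast
    have Q\<psi>: "Q i \<psi>" using i \<psi>(1) Q_def by auto
    then have Qp: "Q i (ph i)" unfolding ph_def by (metis someI)
    define a where "a x = real_of_ereal (\<psi> x)" for x
    define b where "b x = real_of_ereal (ph i x)" for x
    have ea: "\<psi> = (\<lambda>x. ereal (a x))" using fin[OF Q\<psi>] a_def by simp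
    have eb: "ph i = (\<lambda>x. ereal (b x))" using fin[OF Qp] b_def by simp
    have La: "(\<lambda>x. ereal (a x)) \<in> Lexp \<epsilon> \<mu>" using ea \<psi>(1) assms(6) by auto
    have Lb: "(\<lambda>x. ereal (b x)) \<in> Lexp \<epsilon> \<mu>" using eb Qp Q_def assms(6) by auto
    have d: "\<bar>a x - b x\<bar> \<le> \<delta>" for x
    proof -
      have "\<bar>a x - f i x\<bar> \<le> \<delta>/2" "\<bar>b x - f i x\<bar> \<le> \<delta>/2"
        using cl[OF Q\<psi>] cl[OF Qp] unfolding a_def b_def by auto
      then show ?thesis by linarith
    qed
    have d1: "\<forall>x. a x \<le> b x + \<delta>" "\<forall>x. b x \<le> a x + \<delta>" using d by (metis abs_le_D1 abs_minus_commute diff_le_eq add.commute)+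
    have 1: "ctrans c \<epsilon> \<mu> (\<lambda>x. ereal (b x)) y \<le> ctrans c \<epsilon> \<mu> (\<lambda>x. ereal (a x)) y + \<delta>" for y
      by (rule ctrans_cmp[OF assms(1-3) m assms(5) La Lb]) (use d1 in auto)
    have 2: "ctrans c \<epsilon> \<mu> (\<lambda>x. ereal (a x)) y \<le> ctrans c \<epsilon> \<mu> (\<lambda>x. ereal (b x)) y + \<delta>" for y
      by (rule ctrans_cmp[OF assms(1-3) m assms(5) Lb La]) (use d1 in auto)
    have "\<forall>s. \<bar>g s - ereal (h i s)\<bar> \<le> ereal \<delta>"
    proof
      fix s
      have "\<bar>ctrans c \<epsilon> \<mu> \<psi> s - h i s\<bar> \<le> \<delta>"
        using 1[of s] 2[of s] unfolding h_def ea eb by linarith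
      then show "\<bar>g s - ereal (h i s)\<bar> \<le> ereal \<delta>" using \<psi>(2) by simp
    qed
    then show "\<exists>i<n. \<forall>s. \<bar>g s - ereal (h i s)\<bar> \<le> ereal \<delta>" using i(1) by blast
  qed
  then have ex: "\<exists>n. \<exists>f :: nat \<Rightarrow> 'b \<Rightarrow> real. \<forall>g\<in>G. \<exists>i<n. \<forall>s. \<bar>g s - ereal (f i s)\<bar> \<le> ereal \<delta>"
    by blast
  have "(LEAST n. \<exists>f :: nat \<Rightarrow> 'b \<Rightarrow> real. \<forall>g\<in>G. \<exists>i<n. \<forall>s. \<bar>g s - ereal (f i s)\<bar> \<le> ereal \<delta>) \<le> n"
    by (rule Least_le) (use cov in blast)
  then have "covering_number \<delta> G \<le> enat n"
    unfolding covering_number_def using ex by simp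
  then show ?thesis using R G_def by simp
qed

end
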